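(* Let $U$ and $V$ be finite-dimensional vector spaces over a field $\mathbb{K}$. Let $\mathcal{T}$ be an additive subgroup of $\mathcal{L}(U,V)$ that contains a linear subspace $\mathcal{S}$ with $\operatorname{codim}_{\mathcal{L}(U,V)}\mathcal{S}\leq\dim V-2$, and let $F:\mathcal{T}\to V$ be a range-compatible group homomorphism. Then $F$ is local: there exists $x\in U$ with $F(t)=t(x)$ for all $t\in\mathcal{T}$.
   Context: A map $F:\mathcal{T}\to V$ on a subset $\mathcal{T}\subset\mathcal{L}(U,V)$ is range-compatible when $F(t)\in\operatorname{im}t$ for all $t\in\mathcal{T}$. *)

theory Defs
  imports "HOL-Analysis.Analysis"
begin

text \<open>Linear maps U -> V with U = K^n, V = K^m are represented by m x n matrices
  (type 'a^'n^'m), acting by matrix-vector multiplication.\<close>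

definition mat_scale :: "'a::field \<Rightarrow> 'a^'n^'m \<Rightarrow> 'a^'n^'m" where
  "mat_scale c M = (\<chi> i j. c * M $ i $ j)"

definition range_compatible :: "('a::field^'n^'m) set \<Rightarrow> ('a^'n^'m \<Rightarrow> 'a^'m) \<Rightarrow> bool" where
  "range_compatible T F \<longleftrightarrow> (\<forall>t\<in>T. F t \<in> range (\<lambda>x. t *v x))"

definition additive_subgroup :: "('a::ab_group_add) set \<Rightarrow> bool" where
  "additive_subgroup T \<longleftrightarrow> 0 \<in> T \<and> (\<forall>s\<in>T. \<forall>t\<in>T. s + t \<in> T) \<and> (\<forall>t\<in>T. - t \<in> T)"

end

theory Submission imports Defs begin

definition Emat :: "'m \<Rightarrow> 'n \<Rightarrow> 'a::field^'n^'m" where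
 "Emat a b = (\<chi> i j. if i = a \<and> j = b then 1 else 0)"

definition mat_basis0 :: "('a::field^'n^'m) set" where
 "mat_basis0 = {Emat a b | a b. True}"

lemma finite_mat_basis0: "finite (mat_basis0 :: ('a::field^'n^'m) set)"
proof -
  have "(mat_basis0 :: ('a::field^'n^'m) set) = (\<lambda>(a,b). Emat a b) ` (UNIV :: ('m \<times> 'n) set)"
    unfolding mat_basis0_def by auto
  moreover have "finite ((\<lambda>(a,b). Emat a b) ` (UNIV :: ('m \<times> 'n) set) :: ('a::field^'n^'m) set)"
    by (rule finite_imageI) simp
  ultimately show ?thesis by simp
qed

interpretation mat: vector_space "mat_scale :: 'a::field \<Rightarrow> 'a^'n^'m \<Rightarrow> 'a^'n^'m"
  by unfold_locales (simp_all add: mat_scale_def vec_eq_iff algebra_simps)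

lemma sum_delta2: "(\<Sum>x\<in>UNIV. \<Sum>y\<in>UNIV. if i = x \<and> j = y then f x y else 0) = (f (i::'b::finite) (j::'c::finite) :: 'a::comm_monoid_add)"
proof -
  have "(\<Sum>y\<in>UNIV. if i = x \<and> j = y then f x y else 0) = (if i = x then f x j else 0)" for x
    by (cases "i = x") (simp_all add: sum.delta sum.delta')
  then show ?thesis by simp
qed

lemma mat_expand: "(M::'a::field^'n^'m) = (\<Sum>a\<in>UNIV. \<Sum>b\<in>UNIV. mat_scale (M$a$b) (Emat a b))"
  by (simp add: vec_eq_iff sum_component mat_scale_def Emat_def if_distrib sum_delta2 cong: if_cong)

lemma span_mat_basis0: "mat.span (mat_basis0 :: ('a::field^'n^'m) set) = UNIV"
proof -
  have "M \<in> mat.span mat_basis0" for M :: "'a^'n^'m"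
    apply (subst mat_expand)
    by (intro mat.span_sum mat.span_scale mat.span_base) (auto simp: mat_basis0_def)
  then show ?thesis by auto
qed

definition mat_basis :: "('a::field^'n^'m) set" where
 "mat_basis = (SOME B. B \<subseteq> mat_basis0 \<and> mat.independent B \<and> mat_basis0 \<subseteq> mat.span B)"

lemma mat_basis_props: "(mat_basis :: ('a::field^'n^'m) set) \<subseteq> mat_basis0 \<and> mat.independent (mat_basis :: ('a^'n^'m) set) \<and> mat_basis0 \<subseteq> mat.span (mat_basis :: ('a^'n^'m) set)"
proof -
  obtain B :: "('a::field^'n^'m) set" where "B \<subseteq> mat_basis0" "mat.independent B" "mat_basis0 \<subseteq> mat.span B"
    by (rule mat.maximal_independent_subset)
  then have "\<exists>B :: ('a::field^'n^'m) set. B \<subseteq> mat_basis0 \<and> mat.independent B \<and> mat_basis0 \<subseteq> mat.span B" by blast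
  then show ?thesis unfolding mat_basis_def
    by (rule someI_ex[where P="\<lambda>B. B \<subseteq> mat_basis0 \<and> mat.independent B \<and> mat_basis0 \<subseteq> mat.span B"])
qed

interpretation mat: finite_dimensional_vector_space "mat_scale :: 'a::field \<Rightarrow> 'a^'n^'m \<Rightarrow> 'a^'n^'m" mat_basis
proof
  show "finite (mat_basis :: ('a^'n^'m) set)"
    using mat_basis_props finite_mat_basis0 by (rule finite_subset[OF conjunct1])
  show "mat.independent (mat_basis :: ('a^'n^'m) set)" using mat_basis_props by (rule conjunct1[OF conjunct2])
  have "mat.span (mat_basis0 :: ('a^'n^'m) set) \<subseteq> mat.span mat_basis"
    using mat_basis_props mat.span_minimal mat.subspace_span by (metis conjunct2)
  then show "mat.span (mat_basis :: ('a^'n^'m) set) = UNIV" using span_mat_basis0 by (metis subset_antisym subset_UNIV)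
qed


definition Rm :: "'a::field^'m \<Rightarrow> 'a^'n \<Rightarrow> 'a^'n^'m" where
  "Rm y p = (\<chi> i j. y$i * p$j)"

definition col :: "'n \<Rightarrow> 'a::field^'n^'m \<Rightarrow> 'a^'m" where
  "col j s = (\<chi> i. s$i$j)"

definition LY :: "('a::field^'m) set \<Rightarrow> ('a^'n^'m) set" where
  "LY Y = {l. \<forall>w. l *v w \<in> Y}"

definition TY :: "('a::field^'n^'m) set \<Rightarrow> ('a^'m) set \<Rightarrow> ('a^'n^'m) set" where
  "TY S Y = {s + l | s l. s \<in> S \<and> l \<in> LY Y}"

definition BW :: "'a::field^'n \<Rightarrow> ('a^'m) set \<Rightarrow> ('a^'n^'m) set" where
  "BW z W = {s. s *v z \<in> W}"

lemma mv_add: "((s::'a::field^'n^'m) + t) *v x = s *v x + t *v x"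
  by (simp add: vec_eq_iff matrix_vector_mult_def sum.distrib algebra_simps)

lemma mv_diff: "((s::'a::field^'n^'m) - t) *v x = s *v x - t *v x"
  by (simp add: vec_eq_iff matrix_vector_mult_def sum_subtractf algebra_simps)

lemma mv_scale: "(mat_scale c (s::'a::field^'n^'m)) *v x = c *s (s *v x)"
  by (simp add: vec_eq_iff matrix_vector_mult_def mat_scale_def sum_distrib_left algebra_simps)

lemma mv_zero: "(0::'a::field^'n^'m) *v x = 0"
  by (simp add: vec_eq_iff matrix_vector_mult_def)

lemma mv_rdiff: "(s::'a::field^'n^'m) *v (x - y) = s *v x - s *v y"
  by (simp add: vec_eq_iff matrix_vector_mult_def sum_subtractf algebra_simps)

lemma mv_sum: "finite A \<Longrightarrow> (\<Sum>i\<in>A. (f i::'a::field^'n^'m)) *v x = (\<Sum>i\<in>A. f i *v x)"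
  by (induction A rule: finite_induct) (simp_all add: mv_add mv_zero)

lemma Rm_mv: "Rm y p *v x = (\<Sum>j\<in>UNIV. p$j * x$j) *s (y::'a::field^'m)"
  by (simp add: vec_eq_iff matrix_vector_mult_def Rm_def sum_distrib_left algebra_simps)

lemma Rm_add: "Rm (y + y') p = Rm y p + Rm (y'::'a::field^'m) (p::'a^'n)"
  by (simp add: vec_eq_iff Rm_def algebra_simps)

lemma Rm_axis_mv: "Rm y (axis j 1) *v x = x$j *s (y::'a::field^'m)"
proof -
  have "\<And>i. axis j 1 $ i * x $ i = (if i = j then x$j else 0)" by (simp add: axis_def)
  then have "(\<Sum>i\<in>UNIV. axis j 1 $ i * x $ i) = x$j" by (simp add: sum.delta)
  then show ?thesis by (simp add: Rm_mv)
qed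

lemma mat_col_expand: "(s::'a::field^'n^'m) = (\<Sum>j\<in>UNIV. Rm (col j s) (axis j 1))"
  by (simp add: vec_eq_iff sum_component Rm_def col_def axis_def if_distrib sum.delta' cong: if_cong)

lemma mv_col: "(s::'a::field^'n^'m) *v x = (\<Sum>j\<in>UNIV. x$j *s col j s)"
  by (simp add: vec_eq_iff sum_component matrix_vector_mult_def col_def algebra_simps)

lemma Emat_Rm: "(Emat a b :: 'a::field^'n^'m) = Rm (axis a 1) (axis b 1)"
  by (simp add: vec_eq_iff Emat_def Rm_def axis_def)

lemma subspace_LY: "vec.subspace Y \<Longrightarrow> mat.subspace (LY Y :: ('a::field^'n^'m) set)"
  unfolding mat.subspace_def LY_def
  by (auto simp: mv_add mv_scale mv_zero vec.subspace_0 vec.subspace_add vec.subspace_scale)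

lemma subspace_BW: "vec.subspace W \<Longrightarrow> mat.subspace (BW z W :: ('a::field^'n^'m) set)"
  unfolding mat.subspace_def BW_def
  by (auto simp: mv_add mv_scale mv_zero vec.subspace_0 vec.subspace_add vec.subspace_scale)

lemma subspace_TY:
  assumes S: "mat.subspace (S :: ('a::field^'n^'m) set)" and Y: "vec.subspace Y"
  shows "mat.subspace (TY S Y)"
proof -
  have L: "mat.subspace (LY Y :: ('a::field^'n^'m) set)" using subspace_LY[OF Y] .
  show ?thesis
    unfolding mat.subspace_def TY_def
  proof (intro conjI allI ballI)
    show "0 \<in> {s + l |s l. s \<in> S \<and> l \<in> LY Y}"
      using mat.subspace_0[OF S] mat.subspace_0[OF L] by force
  next
    fix x y assume "x \<in> {s + l |s l. s \<in> S \<and> l \<in> LY Y}" "y \<in> {s + l |s l. s \<in> S \<and> l \<in> LY Y}"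
    then obtain s1 l1 s2 l2 where "x = s1 + l1" "y = s2 + l2" "s1 \<in> S" "s2 \<in> S" "l1 \<in> LY Y" "l2 \<in> LY Y"
      by blast
    then show "x + y \<in> {s + l |s l. s \<in> S \<and> l \<in> LY Y}"
      using mat.subspace_add[OF S] mat.subspace_add[OF L]
      by (intro CollectI exI[of _ "s1 + s2"] exI[of _ "l1 + l2"]) (simp add: algebra_simps)
  next
    fix c x assume "x \<in> {s + l |s l. s \<in> S \<and> l \<in> LY Y}"
    then obtain s1 l1 where "x = s1 + l1" "s1 \<in> S" "l1 \<in> LY Y" by blast
    then show "mat_scale c x \<in> {s + l |s l. s \<in> S \<and> l \<in> LY Y}"
      using mat.subspace_scale[OF S] mat.subspace_scale[OF L]
      by (intro CollectI exI[of _ "mat_scale c s1"] exI[of _ "mat_scale c l1"]) (simp add: mat.scale_right_distrib)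
  qed
qed

lemma S_TY: "mat.subspace (LY Y :: ('a::field^'n^'m) set) \<Longrightarrow> (S :: ('a::field^'n^'m) set) \<subseteq> TY S Y"
  unfolding TY_def using mat.subspace_0 by force

lemma LY_TY: "mat.subspace (S :: ('a::field^'n^'m) set) \<Longrightarrow> LY Y \<subseteq> TY S Y"
  unfolding TY_def using mat.subspace_0 by force

lemma vec_full: "vec.subspace (Y::('a::field^'m) set) \<Longrightarrow> vec.dim (UNIV :: ('a^'m) set) \<le> vec.dim Y \<Longrightarrow> Y = UNIV"
  by (metis antisym vec.dim_eq_full vec.dim_subset_UNIV vec.dim_UNIV vec.dimension_def vec.span_eq_iff)

lemma mat_full: "mat.subspace (Y::('a::field^'n^'m) set) \<Longrightarrow> mat.dim (UNIV :: ('a^'n^'m) set) \<le> mat.dim Y \<Longrightarrow> Y = UNIV"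
  by (metis antisym mat.dim_eq_full mat.dim_subset_UNIV mat.dim_UNIV mat.dimension_def mat.span_eq_iff)

lemma vspan: "vec.subspace (Y::('a::field^'m) set) \<Longrightarrow> vec.span Y = Y"
  by (simp add: vec.span_eq_iff)

lemma mspan: "mat.subspace (Y::('a::field^'n^'m) set) \<Longrightarrow> mat.span Y = Y"
  by (simp add: mat.span_eq_iff)

lemma vec_dim_ins: "vec.subspace (Y::('a::field^'m) set) \<Longrightarrow> y \<notin> Y \<Longrightarrow> vec.dim (vec.span (insert y Y)) = vec.dim Y + 1"
  by (simp add: vec.dim_insert vspan)

lemma mat_dim_ins: "mat.subspace (T::('a::field^'n^'m) set) \<Longrightarrow> a \<notin> T \<Longrightarrow> T \<subseteq> T' \<Longrightarrow> a \<in> T' \<Longrightarrow> mat.dim T + 1 \<le> mat.dim T'"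
proof -
  assume T: "mat.subspace T" and a: "a \<notin> T" "T \<subseteq> T'" "a \<in> T'"
  have "mat.dim (insert a T) = mat.dim T + 1" using T a by (simp add: mat.dim_insert mspan)
  moreover have "mat.dim (insert a T) \<le> mat.dim T'" using a by (intro mat.dim_subset) auto
  ultimately show ?thesis by simp
qed

lemma vec_exists_out: "vec.dim (Y::('a::field^'m) set) < vec.dim (UNIV :: ('a^'m) set) \<Longrightarrow> \<exists>y. y \<notin> Y"
  by (metis UNIV_eq_I less_irrefl)


lemma dim_BW:
  fixes z :: "'a::field^'n" and W :: "('a^'m) set"
  assumes z: "z \<noteq> 0"
  shows "vec.subspace W \<Longrightarrow> vec.dim W + k = vec.dim (UNIV::('a^'m) set)
     \<Longrightarrow> mat.dim (BW z W :: ('a^'n^'m) set) + k = mat.dim (UNIV :: ('a^'n^'m) set)"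
proof (induction k arbitrary: W)
  case 0
  have "W = UNIV" using vec_full[of W] "0.prems" by simp
  then have "(BW z W :: ('a^'n^'m) set) = UNIV" by (simp add: BW_def)
  then show ?case by simp
next
  case (Suc k)
  then have "vec.dim W < vec.dim (UNIV::('a^'m) set)" by simp
  then obtain w where w: "w \<notin> W" using vec_exists_out by blast
  define W' where "W' = vec.span (insert w W)"
  have W': "vec.subspace W'" unfolding W'_def by simp
  have dW': "vec.dim W' = vec.dim W + 1" unfolding W'_def using vec_dim_ins[OF Suc.prems(1) w] .
  have IH: "mat.dim (BW z W' :: ('a^'n^'m) set) + k = mat.dim (UNIV :: ('a^'n^'m) set)"
    using Suc.IH[OF W'] Suc.prems(2) dW' by simp
  obtain i where i: "z$i \<noteq> 0" using z by (metis vec_eq_iff zero_index)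
  define p where "p = (axis i (1 / z$i) :: 'a^'n)"
  have pz: "(\<Sum>j\<in>UNIV. p$j * z$j) = 1"
  proof -
    have "\<And>j. p$j * z$j = (if j = i then 1 else 0)" using i by (simp add: p_def axis_def)
    then show ?thesis by (simp add: sum.delta)
  qed
  define R where "R = (Rm w p :: 'a^'n^'m)"
  have Rz: "R *v z = w" unfolding R_def Rm_mv pz by simp
  have BWs: "mat.subspace (BW z W :: ('a^'n^'m) set)" using subspace_BW[OF Suc.prems(1)] .
  have BWs': "mat.subspace (BW z W' :: ('a^'n^'m) set)" using subspace_BW[OF W'] .
  have RnB: "R \<notin> BW z W" using Rz w by (simp add: BW_def)
  have eq: "BW z W' = mat.span (insert R (BW z W))"
  proof
    show "BW z W' \<subseteq> mat.span (insert R (BW z W))"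
    proof
      fix s assume "s \<in> (BW z W' :: ('a^'n^'m) set)"
      then have "s *v z \<in> vec.span (insert w W)" by (simp add: BW_def W'_def)
      then obtain c where c: "s *v z - c *s w \<in> W"
        using vec.span_breakdown_eq vspan[OF Suc.prems(1)] by blast
      have "(s - mat_scale c R) *v z = s *v z - c *s w" by (simp add: mv_diff mv_scale Rz)
      then have "s - mat_scale c R \<in> BW z W" using c by (simp add: BW_def)
      then show "s \<in> mat.span (insert R (BW z W))"
        using mat.span_breakdown_eq mspan[OF BWs] by blast
    qed
  next
    have "R \<in> BW z W'" using Rz by (simp add: BW_def W'_def vec.span_base)
    moreover have "BW z W \<subseteq> BW z W'" unfolding BW_def W'_def by (auto intro: vec.span_base)
    ultimately show "mat.span (insert R (BW z W)) \<subseteq> BW z W'"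
      using mat.span_minimal[OF _ BWs'] by blast
  qed
  have "mat.dim (BW z W' :: ('a^'n^'m) set) = mat.dim (BW z W :: ('a^'n^'m) set) + 1"
    unfolding eq mat.dim_span using RnB by (simp add: mat.dim_insert mspan[OF BWs])
  then show ?case using IH by simp
qed

lemma vec_meet:
  fixes Y :: "('a::field^'m) set"
  assumes Y: "vec.subspace Y" and y2: "y2 \<notin> vec.span (insert y1 Y)"
    and v1: "v \<in> vec.span (insert y1 Y)" and v2: "v \<in> vec.span (insert y2 Y)"
  shows "v \<in> Y"
proof -
  obtain k where k: "v - k *s y2 \<in> Y" using v2 vec.span_breakdown_eq vspan[OF Y] by blast
  have "k = 0"
  proof (rule ccontr)
    assume k0: "k \<noteq> 0"
    have sub: "vec.subspace (vec.span (insert y1 Y))" by simp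
    have "v - k *s y2 \<in> vec.span (insert y1 Y)"
      using k by (intro vec.span_base insertI2)
    then have "v - (v - k *s y2) \<in> vec.span (insert y1 Y)" using v1 vec.span_diff by blast
    then have "k *s y2 \<in> vec.span (insert y1 Y)" by simp
    then have "(1/k) *s (k *s y2) \<in> vec.span (insert y1 Y)" using vec.span_scale by blast
    then have "y2 \<in> vec.span (insert y1 Y)" using k0 by simp
    then show False using y2 by simp
  qed
  then show ?thesis using k by simp
qed

lemma aux_comb: "(e::'a::field) \<noteq> 0 \<Longrightarrow> y - (- f / e) *s y1 = (1 / e) *s (e *s y + f *s (y1::'a^'m))"
  by (simp add: vec_eq_iff field_simps)

lemma aux_inv: "(e::'a::field) \<noteq> 0 \<Longrightarrow> (1 / e) *s (e *s (x::'a^'m)) = x"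
  by (simp add: vec_eq_iff)

lemma eigen_mod:
  fixes g :: "'a::field^'m \<Rightarrow> 'a^'m" and Y :: "('a^'m) set"
  assumes Y: "vec.subspace Y" and y1: "y1 \<notin> Y" and y2: "y2 \<notin> vec.span (insert y1 Y)"
    and eig: "\<And>y. \<exists>c. g y - c *s y \<in> Y"
    and add: "\<And>y y'. g (y + y') - g y - g y' \<in> Y"
  shows "\<exists>a. \<forall>y. g y - a *s y \<in> Y"
proof -
  obtain a where a: "g y1 - a *s y1 \<in> Y" using eig by blast
  have out: "g y - a *s y \<in> Y" if yn: "y \<notin> vec.span (insert y1 Y)" for y
  proof -
    obtain b where b: "g y - b *s y \<in> Y" using eig by blast
    obtain c where c: "g (y + y1) - c *s (y + y1) \<in> Y" using eig by blast
    have "(c - b) *s y + (c - a) *s y1 =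
      - (g (y + y1) - c *s (y + y1)) + (g (y + y1) - g y - g y1) + (g y - b *s y) + (g y1 - a *s y1)"
      by (simp add: vec_eq_iff algebra_simps)
    moreover have "\<dots> \<in> Y"
      using a b c add[of y y1] by (meson Y vec.subspace_add vec.subspace_neg)
    ultimately have comb: "(c - b) *s y + (c - a) *s y1 \<in> Y" by metis
    have cb: "c = b"
    proof (rule ccontr)
      assume cb: "c \<noteq> b"
      have "y - (- (c - a) / (c - b)) *s y1 = (1 / (c - b)) *s ((c - b) *s y + (c - a) *s y1)"
        using cb by (intro aux_comb) simp
      moreover have "\<dots> \<in> Y" using comb Y vec.subspace_scale by blast
      ultimately have "y \<in> vec.span (insert y1 Y)" using vec.span_breakdown_eq vspan[OF Y] by metis
      then show False using yn by simp
    qed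
    have ca: "c = a"
    proof (rule ccontr)
      assume ca: "c \<noteq> a"
      have "y1 = (1 / (c - a)) *s ((c - b) *s y + (c - a) *s y1)"
      proof -
        have "c - a \<noteq> 0" using ca by simp
        then have "y1 = (1 / (c - a)) *s ((c - a) *s y1)" by (rule aux_inv[symmetric])
        then show ?thesis using cb by simp
      qed
      moreover have "\<dots> \<in> Y" using comb Y vec.subspace_scale by blast
      ultimately show False using y1 by simp
    qed
    show ?thesis using b cb ca by simp
  qed
  have "g y - a *s y \<in> Y" for y
  proof (cases "y \<in> vec.span (insert y1 Y)")
    case False then show ?thesis using out by blast
  next
    case True
    have "y + y2 \<notin> vec.span (insert y1 Y)"
    proof
      assume "y + y2 \<in> vec.span (insert y1 Y)"
      then have "(y + y2) - y \<in> vec.span (insert y1 Y)" using True vec.span_diff by blast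
      then show False using y2 by simp
    qed
    then have h1: "g (y + y2) - a *s (y + y2) \<in> Y" using out by blast
    have h2: "g y2 - a *s y2 \<in> Y" using out y2 by blast
    have "g y - a *s y = (g (y + y2) - a *s (y + y2)) - (g y2 - a *s y2) - (g (y + y2) - g y - g y2)"
      by (simp add: vec_eq_iff algebra_simps)
    moreover have "\<dots> \<in> Y" using h1 h2 add[of y y2] by (meson Y vec.subspace_diff)
    ultimately show ?thesis by simp
  qed
  then show ?thesis by blast
qed


lemma F_sum:
  fixes S :: "('a::field^'n^'m) set" and F :: "'a^'n^'m \<Rightarrow> 'a^'m"
  assumes S: "mat.subspace S" and F_add: "\<forall>u\<in>S. \<forall>v\<in>S. F (u + v) = F u + F v"
  shows "finite A \<Longrightarrow> (\<forall>i\<in>A. u i \<in> S) \<Longrightarrow> F (\<Sum>i\<in>A. u i) = (\<Sum>i\<in>A. F (u i))"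
proof (induction A rule: finite_induct)
  case empty
  have "F (0 + 0) = F 0 + F 0" using F_add mat.subspace_0[OF S] by blast
  then show ?case by simp
next
  case (insert x A)
  have "(\<Sum>i\<in>A. u i) \<in> S" using insert.prems by (intro mat.subspace_sum[OF S]) auto
  have ux: "u x \<in> S" using insert.prems by simp
  have "F (\<Sum>i\<in>insert x A. u i) = F (u x + (\<Sum>i\<in>A. u i))" using insert.hyps by simp
  also have "\<dots> = F (u x) + F (\<Sum>i\<in>A. u i)" using F_add ux \<open>(\<Sum>i\<in>A. u i) \<in> S\<close> by blast
  also have "\<dots> = F (u x) + (\<Sum>i\<in>A. F (u i))" using insert.IH insert.prems by simp
  also have "\<dots> = (\<Sum>i\<in>insert x A. F (u i))" using insert.hyps by simp
  finally show ?case .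
qed

lemma base:
  fixes S :: "('a::field^'n^'m) set" and F :: "'a^'n^'m \<Rightarrow> 'a^'m" and Y :: "('a^'m) set"
  assumes S: "mat.subspace S" and Y: "vec.subspace Y"
    and F_add: "\<forall>u\<in>S. \<forall>v\<in>S. F (u + v) = F u + F v"
    and full: "TY S Y = UNIV" and rc: "\<forall>s\<in>S. \<exists>w. F s - s *v w \<in> Y"
    and y1: "y1 \<notin> Y" and y2: "y2 \<notin> vec.span (insert y1 Y)"
  shows "\<exists>x. \<forall>s\<in>S. F s - s *v x \<in> Y"
proof -
  have L: "mat.subspace (LY Y :: ('a^'n^'m) set)" using subspace_LY[OF Y] .
  have ex: "\<exists>\<sigma>. \<sigma> \<in> S \<and> Rm y (axis j 1) - \<sigma> \<in> LY Y" for y j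
  proof -
    have "Rm y (axis j 1) \<in> TY S Y" using full by simp
    then obtain s l where sl: "Rm y (axis j 1) = s + l" "s \<in> S" "l \<in> LY Y" unfolding TY_def by blast
    have "Rm y (axis j 1) - s = l" using sl(1) by simp
    then show ?thesis using sl by metis
  qed
  define \<sigma> where "\<sigma> j y = (SOME \<sigma>. \<sigma> \<in> S \<and> Rm y (axis j 1) - \<sigma> \<in> LY Y)" for j y
  have \<sigma>SL: "\<sigma> j y \<in> S \<and> Rm y (axis j 1) - \<sigma> j y \<in> LY Y" for j y
    unfolding \<sigma>_def by (rule someI_ex[where P="\<lambda>\<sigma>. \<sigma> \<in> S \<and> Rm y (axis j 1) - \<sigma> \<in> LY Y", OF ex[of y j]])
  have \<sigma>S: "\<sigma> j y \<in> S" and \<sigma>L: "Rm y (axis j 1) - \<sigma> j y \<in> LY Y" for j y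
    using \<sigma>SL[of j y] by auto
  have F0: "F u \<in> Y" if "u \<in> S" "u \<in> LY Y" for u
  proof -
    have "\<exists>w. F u - u *v w \<in> Y" using rc that(1) by (rule bspec)
    then obtain w where w: "F u - u *v w \<in> Y" ..
    have "u *v w \<in> Y" using that by (simp add: LY_def)
    then have "(F u - u *v w) + u *v w \<in> Y" using w vec.subspace_add[OF Y] by blast
    then show ?thesis by simp
  qed
  define g where "g j y = F (\<sigma> j y)" for j y
  have eig: "\<exists>c. g j y - c *s y \<in> Y" for j y
  proof -
    have "\<exists>w. F (\<sigma> j y) - \<sigma> j y *v w \<in> Y" using rc \<sigma>S by (rule bspec)
    then obtain w where w: "F (\<sigma> j y) - \<sigma> j y *v w \<in> Y" ..
    have w2: "(Rm y (axis j 1) - \<sigma> j y) *v w \<in> Y" using \<sigma>L by (simp add: LY_def)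
    have "g j y - w$j *s y = (F (\<sigma> j y) - \<sigma> j y *v w) - ((Rm y (axis j 1) - \<sigma> j y) *v w)"
      by (simp add: g_def mv_diff Rm_axis_mv)
    moreover have "(F (\<sigma> j y) - \<sigma> j y *v w) - ((Rm y (axis j 1) - \<sigma> j y) *v w) \<in> Y"
      using w w2 by (rule vec.subspace_diff[OF Y])
    ultimately have "g j y - w$j *s y \<in> Y" by simp
    then show ?thesis by blast
  qed
  have add: "g j (y + y') - g j y - g j y' \<in> Y" for j y y'
  proof -
    define u where "u = \<sigma> j (y + y') - \<sigma> j y - \<sigma> j y'"
    have uS: "u \<in> S" unfolding u_def using \<sigma>S mat.subspace_diff[OF S] by blast
    have eq: "u = (Rm y (axis j 1) - \<sigma> j y) + (Rm y' (axis j 1) - \<sigma> j y') - (Rm (y + y') (axis j 1) - \<sigma> j (y + y'))"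
      unfolding u_def Rm_add by (simp add: algebra_simps)
    have "(Rm y (axis j 1) - \<sigma> j y) + (Rm y' (axis j 1) - \<sigma> j y') - (Rm (y + y') (axis j 1) - \<sigma> j (y + y')) \<in> LY Y"
      by (intro mat.subspace_diff[OF L] mat.subspace_add[OF L] \<sigma>L)
    then have uL: "u \<in> LY Y" by (simp only: eq)
    have "F (\<sigma> j (y + y')) = F (u + (\<sigma> j y + \<sigma> j y'))" unfolding u_def by (simp add: algebra_simps)
    also have "\<dots> = F u + (F (\<sigma> j y) + F (\<sigma> j y'))"
      using F_add uS \<sigma>S mat.subspace_add[OF S] by simp
    finally have "g j (y + y') - g j y - g j y' = F u" unfolding g_def by simp
    then show ?thesis using F0 uS uL by simp
  qed
  have ej: "\<exists>a. \<forall>y. g j y - a *s y \<in> Y" for j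
    by (rule eigen_mod[where g="g j", OF Y y1 y2 eig[of j] add[of j]])
  have "\<forall>j. \<exists>a. \<forall>y. g j y - a *s y \<in> Y" using ej by blast
  from choice[OF this] obtain a where a: "\<forall>j. \<forall>y. g j y - a j *s y \<in> Y" by blast
  define x where "x = (\<chi> j. a j)"
  have "F s - s *v x \<in> Y" if sS: "s \<in> S" for s
  proof -
    define r where "r = s - (\<Sum>j\<in>UNIV. \<sigma> j (col j s))"
    have sumS: "(\<Sum>j\<in>UNIV. \<sigma> j (col j s)) \<in> S" using \<sigma>S by (intro mat.subspace_sum[OF S])
    have rS: "r \<in> S" unfolding r_def using sS sumS mat.subspace_diff[OF S] by blast
    have "r = (\<Sum>j\<in>UNIV. Rm (col j s) (axis j 1)) - (\<Sum>j\<in>UNIV. \<sigma> j (col j s))"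
      unfolding r_def by (simp only: mat_col_expand[of s, symmetric])
    also have "\<dots> = (\<Sum>j\<in>UNIV. Rm (col j s) (axis j 1) - \<sigma> j (col j s))"
      by (simp add: sum_subtractf)
    also have "\<dots> \<in> LY Y" by (intro mat.subspace_sum[OF L] \<sigma>L)
    finally have rL: "r \<in> LY Y" .
    have Fr: "F r \<in> Y" using F0 rS rL by blast
    have "F s = F (r + (\<Sum>j\<in>UNIV. \<sigma> j (col j s)))" unfolding r_def by simp
    also have "\<dots> = F r + F (\<Sum>j\<in>UNIV. \<sigma> j (col j s))" using F_add rS sumS by blast
    also have "\<dots> = F r + (\<Sum>j\<in>UNIV. g j (col j s))"
      using F_sum[OF S F_add, of UNIV "\<lambda>j. \<sigma> j (col j s)"] \<sigma>S by (simp add: g_def)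
    finally have Fs: "F s = F r + (\<Sum>j\<in>UNIV. g j (col j s))" .
    have sx: "s *v x = (\<Sum>j\<in>UNIV. a j *s col j s)" by (simp add: mv_col x_def)
    have "F s - s *v x = F r + (\<Sum>j\<in>UNIV. g j (col j s) - a j *s col j s)"
      unfolding Fs sx by (simp add: sum_subtractf)
    moreover have "(\<Sum>j\<in>UNIV. g j (col j s) - a j *s col j s) \<in> Y"
      using a by (intro vec.subspace_sum[OF Y]) blast
    moreover have "F r + (\<Sum>j\<in>UNIV. g j (col j s) - a j *s col j s) \<in> Y"
      using Fr calculation(2) by (rule vec.subspace_add[OF Y])
    ultimately show ?thesis by simp
  qed
  then show ?thesis by blast
qed


lemma main:
  fixes S :: "('a::field^'n^'m) set" and F :: "'a^'n^'m \<Rightarrow> 'a^'m"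
  assumes S: "mat.subspace S" and F_add: "\<forall>u\<in>S. \<forall>v\<in>S. F (u + v) = F u + F v"
  shows "vec.subspace Y \<Longrightarrow> vec.dim Y + d = vec.dim (UNIV::('a^'m) set)
    \<Longrightarrow> mat.dim (UNIV::('a^'n^'m) set) + 2 \<le> mat.dim (TY S Y) + d
    \<Longrightarrow> (\<forall>s\<in>S. \<exists>w. F s - s *v w \<in> Y) \<Longrightarrow> \<exists>x. \<forall>s\<in>S. F s - s *v x \<in> Y"
proof (induction d arbitrary: Y)
  case 0
  have "mat.dim (TY S Y) \<le> mat.dim (UNIV::('a^'n^'m) set)" by (rule mat.dim_subset) simp
  then show ?case using "0.prems"(3) by simp
next
  case (Suc d)
  note Y = Suc.prems(1) and dY = Suc.prems(2) and cd = Suc.prems(3) and rc = Suc.prems(4)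
  have T: "mat.subspace (TY S Y)" using subspace_TY[OF S Y] .
  show ?case
  proof (cases "TY S Y = UNIV")
    case True
    have "vec.dim Y < vec.dim (UNIV::('a^'m) set)" using cd dY True by simp
    then obtain y1 where y1: "y1 \<notin> Y" using vec_exists_out by blast
    have "vec.dim (vec.span (insert y1 Y)) < vec.dim (UNIV::('a^'m) set)"
      using vec_dim_ins[OF Y y1] cd dY True by simp
    then obtain y2 where y2: "y2 \<notin> vec.span (insert y1 Y)" using vec_exists_out by blast
    show ?thesis by (rule base[OF S Y F_add True rc y1 y2])
  next
    case False
    then obtain A where A: "A \<notin> TY S Y" by blast
    have dT: "mat.dim (TY S Y) + 1 \<le> mat.dim (UNIV::('a^'n^'m) set)"
      by (rule mat_dim_ins[OF T A]) auto
    have "\<exists>a b. Emat a b \<notin> TY S Y"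
    proof (rule ccontr)
      assume "\<not> ?thesis"
      then have "mat_basis0 \<subseteq> TY S Y" by (auto simp: mat_basis0_def)
      then have "mat.span mat_basis0 \<subseteq> TY S Y" using mat.span_minimal[OF _ T] by blast
      then show False using A span_mat_basis0 by auto
    qed
    then obtain a b where ab: "Emat a b \<notin> TY S Y" by blast
    define e where "e = (axis b 1 :: 'a^'n)"
    have good: "\<exists>x. (\<forall>s\<in>S. F s - s *v x \<in> vec.span (insert y Y)) \<and> y \<notin> Y \<and>
        mat.dim (TY S Y) + 1 \<le> mat.dim (TY S (vec.span (insert y Y)))"
      if yg: "Rm y e \<notin> TY S Y" for y
    proof -
      have yY: "y \<notin> Y"
      proof
        assume "y \<in> Y"
        then have "\<forall>w. Rm y e *v w \<in> Y"
          unfolding e_def Rm_axis_mv using vec.subspace_scale[OF Y] by simp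
        then have "Rm y e \<in> LY Y" unfolding LY_def by simp
        then show False using yg LY_TY[OF S] by blast
      qed
      define Y' where "Y' = vec.span (insert y Y)"
      have Y': "vec.subspace Y'" unfolding Y'_def by simp
      have dY': "vec.dim Y' + d = vec.dim (UNIV::('a^'m) set)"
        using vec_dim_ins[OF Y yY] dY unfolding Y'_def by simp
      have YY': "Y \<subseteq> Y'" unfolding Y'_def by (rule order_trans[OF subset_insertI vec.span_superset])
      have LL: "LY Y \<subseteq> LY Y'" using YY' unfolding LY_def by auto
      have TT: "TY S Y \<subseteq> TY S Y'" using LL unfolding TY_def by blast
      have "Rm y e *v w \<in> Y'" for w
      proof -
        have "y \<in> Y'" unfolding Y'_def by (rule vec.span_base) simp
        then have "w$b *s y \<in> Y'" using vec.subspace_scale[OF Y'] by blast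
        then show ?thesis unfolding e_def Rm_axis_mv .
      qed
      then have "Rm y e \<in> LY Y'" unfolding LY_def by blast
      then have RT: "Rm y e \<in> TY S Y'" using LY_TY[OF S] by blast
      have dTT: "mat.dim (TY S Y) + 1 \<le> mat.dim (TY S Y')" by (rule mat_dim_ins[OF T yg TT RT])
      have rc': "\<forall>s\<in>S. \<exists>w. F s - s *v w \<in> Y'"
      proof
        fix s assume sS: "s \<in> S"
        have "\<exists>w. F s - s *v w \<in> Y" using rc sS by (rule bspec)
        then obtain w where "F s - s *v w \<in> Y" ..
        then have "F s - s *v w \<in> Y'" using YY' by (rule rev_subsetD)
        then show "\<exists>w. F s - s *v w \<in> Y'" ..
      qed
      have "mat.dim (UNIV::('a^'n^'m) set) + 2 \<le> mat.dim (TY S Y') + d" using cd dTT by simp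
      from Suc.IH[OF Y' dY' this rc'] obtain x where "\<forall>s\<in>S. F s - s *v x \<in> Y'" ..
      then show ?thesis using yY dTT unfolding Y'_def by blast
    qed
    define y1 where "y1 = (axis a 1 :: 'a^'m)"
    have y1g: "Rm y1 e \<notin> TY S Y" using ab by (simp add: Emat_Rm e_def y1_def)
    obtain x1 where x1: "\<forall>s\<in>S. F s - s *v x1 \<in> vec.span (insert y1 Y)" and y1Y: "y1 \<notin> Y"
      and dT1: "mat.dim (TY S Y) + 1 \<le> mat.dim (TY S (vec.span (insert y1 Y)))"
      using good[OF y1g] by blast
    define Y1 where "Y1 = vec.span (insert y1 Y)"
    have Y1: "vec.subspace Y1" unfolding Y1_def by simp
    have dY1: "vec.dim Y1 = vec.dim Y + 1" unfolding Y1_def by (rule vec_dim_ins[OF Y y1Y])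
    have d2: "2 \<le> d" using cd dT by simp
    have "vec.dim Y1 < vec.dim (UNIV::('a^'m) set)" using dY1 dY d2 by simp
    then obtain w where w: "w \<notin> Y1" using vec_exists_out by blast
    have y1Y1: "y1 \<in> Y1" unfolding Y1_def by (rule vec.span_base) simp
    define y2 where "y2 = (if Rm w e \<notin> TY S Y then w else w + y1)"
    have y2g: "Rm y2 e \<notin> TY S Y"
    proof (cases "Rm w e \<notin> TY S Y")
      case True then show ?thesis by (simp add: y2_def)
    next
      case False
      show ?thesis
      proof
        assume "Rm y2 e \<in> TY S Y"
        then have "Rm (w + y1) e \<in> TY S Y" using False by (simp add: y2_def)
        then have "Rm (w + y1) e - Rm w e \<in> TY S Y" using False mat.subspace_diff[OF T] by blast
        then have "Rm y1 e \<in> TY S Y" by (simp add: Rm_add)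
        then show False using y1g by blast
      qed
    qed
    have y2Y1: "y2 \<notin> Y1"
    proof (cases "Rm w e \<notin> TY S Y")
      case True then show ?thesis using w by (simp add: y2_def)
    next
      case False
      show ?thesis
      proof
        assume "y2 \<in> Y1"
        then have "w + y1 \<in> Y1" using False by (simp add: y2_def)
        then have "(w + y1) - y1 \<in> Y1" using y1Y1 vec.subspace_diff[OF Y1] by blast
        then show False using w by simp
      qed
    qed
    obtain x2 where x2: "\<forall>s\<in>S. F s - s *v x2 \<in> vec.span (insert y2 Y)"
      using good[OF y2g] by blast
    define W where "W = vec.span (insert y2 Y1)"
    have Wsub: "vec.subspace W" unfolding W_def by simp
    have dW: "vec.dim W = vec.dim Y + 2" unfolding W_def using vec_dim_ins[OF Y1 y2Y1] dY1 by simp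
    have Y1W: "Y1 \<subseteq> W" unfolding W_def by (rule order_trans[OF subset_insertI vec.span_superset])
    have YY1: "Y \<subseteq> Y1" unfolding Y1_def by (rule order_trans[OF subset_insertI vec.span_superset])
    have Y2W: "vec.span (insert y2 Y) \<subseteq> W"
    proof (rule vec.span_minimal[OF _ Wsub])
      have "y2 \<in> W" unfolding W_def by (rule vec.span_base) simp
      then show "insert y2 Y \<subseteq> W" using YY1 Y1W by blast
    qed
    have zW: "s *v (x1 - x2) \<in> W" if sS: "s \<in> S" for s
    proof -
      have a1: "F s - s *v x1 \<in> W" using x1 sS Y1W unfolding Y1_def by blast
      have a2: "F s - s *v x2 \<in> W" using x2 sS Y2W by blast
      have "s *v (x1 - x2) = (F s - s *v x2) - (F s - s *v x1)" by (simp add: mv_rdiff)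
      then show ?thesis using a1 a2 vec.subspace_diff[OF Wsub] by metis
    qed
    have "x1 = x2"
    proof (rule ccontr)
      assume ne: "x1 \<noteq> x2"
      then have z: "x1 - x2 \<noteq> 0" by simp
      have "vec.dim W + (d - 1) = vec.dim (UNIV::('a^'m) set)" using dW dY d2 by simp
      then have dB: "mat.dim (BW (x1 - x2) W :: ('a^'n^'m) set) + (d - 1) = mat.dim (UNIV :: ('a^'n^'m) set)"
        by (rule dim_BW[OF z Wsub])
      have "TY S Y1 \<subseteq> BW (x1 - x2) W"
      proof
        fix t assume "t \<in> TY S Y1"
        then obtain s l where t: "t = s + l" "s \<in> S" "l \<in> LY Y1" unfolding TY_def by blast
        have "l *v (x1 - x2) \<in> W" using t(3) Y1W unfolding LY_def by blast
        then have "s *v (x1 - x2) + l *v (x1 - x2) \<in> W" using zW[OF t(2)] vec.subspace_add[OF Wsub] by blast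
        then show "t \<in> BW (x1 - x2) W" unfolding BW_def t(1) by (simp add: mv_add)
      qed
      then have "mat.dim (TY S Y1) \<le> mat.dim (BW (x1 - x2) W :: ('a^'n^'m) set)" by (rule mat.dim_subset)
      then show False using dB dT1 cd d2 unfolding Y1_def by simp
    qed
    have "F s - s *v x1 \<in> Y" if sS: "s \<in> S" for s
    proof (rule vec_meet[OF Y])
      show "y2 \<notin> vec.span (insert y1 Y)" using y2Y1 unfolding Y1_def .
      show "F s - s *v x1 \<in> vec.span (insert y1 Y)" using x1 sS by blast
      show "F s - s *v x1 \<in> vec.span (insert y2 Y)" using x2 sS \<open>x1 = x2\<close> by blast
    qed
    then show ?thesis by blast
  qed
qed


lemma mv_axis_entry: "((l::'a::field^'n^'m) *v axis j 1) $ i = l$i$j"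
proof -
  have "\<And>k. l$i$k * axis j 1 $ k = (if k = j then l$i$j else 0)" by (simp add: axis_def)
  then show ?thesis by (simp add: matrix_vector_mult_def sum.delta)
qed

lemma LY0: "LY {0} = {0 :: 'a::field^'n^'m}"
proof
  show "LY {0} \<subseteq> {0 :: 'a::field^'n^'m}"
  proof
    fix l :: "'a^'n^'m" assume "l \<in> LY {0}"
    then have "\<And>j. l *v axis j 1 = 0" by (simp add: LY_def)
    then have "\<And>i j. l$i$j = 0" by (metis mv_axis_entry zero_index)
    then show "l \<in> {0}" by (simp add: vec_eq_iff)
  qed
  show "{0} \<subseteq> (LY {0} :: ('a^'n^'m) set)" by (simp add: LY_def mv_zero)
qed

lemma TY0: "mat.subspace (S :: ('a::field^'n^'m) set) \<Longrightarrow> TY S {0} = S"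
  unfolding TY_def LY0 by auto

lemma mat_scale_zero[simp]: "mat_scale 0 (M::'a::field^'n^'m) = 0"
  by (simp add: mat_scale_def vec_eq_iff)

lemma mat_scale_one[simp]: "mat_scale 1 (M::'a::field^'n^'m) = M"
  by (simp add: mat_scale_def vec_eq_iff)

lemma extend_t:
  fixes T S :: "('a::field ^ 'n ^ 'm) set" and F :: "'a ^ 'n ^ 'm \<Rightarrow> 'a ^ 'm"
  assumes T_grp: "additive_subgroup T" and Ssub: "mat.subspace S" and S_T: "S \<subseteq> T"
    and F_hom: "\<forall>s\<in>T. \<forall>t\<in>T. F (s + t) = F s + F t"
    and F_rc: "range_compatible T F"
    and x0: "\<forall>s\<in>S. F s = s *v x0"
    and cd: "mat.dim (UNIV :: ('a^'n^'m) set) + 2 \<le> mat.dim S + vec.dim (UNIV :: ('a^'m) set)"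
    and tT: "t \<in> T" and tS: "t \<notin> S"
  shows "F t = t *v x0"
proof -
  define St where "St = mat.span (insert t S)"
  have Stsub: "mat.subspace St" unfolding St_def by simp
  have SSt: "S \<subseteq> St" unfolding St_def by (rule order_trans[OF subset_insertI mat.span_superset])
  have tSt: "t \<in> St" unfolding St_def by (rule mat.span_base) simp
  have ex1: "\<exists>c. u - mat_scale c t \<in> S" if "u \<in> St" for u
    using that mat.span_breakdown_eq mspan[OF Ssub] unfolding St_def by blast
  have uniq: "c = c'" if "u - mat_scale c t \<in> S" "u - mat_scale c' t \<in> S" for u c c'
  proof (rule ccontr)
    assume ne: "c \<noteq> c'"
    have "mat_scale (c' - c) t = (u - mat_scale c t) - (u - mat_scale c' t)"
      by (simp add: vec_eq_iff mat_scale_def algebra_simps)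
    then have "mat_scale (c' - c) t \<in> S" using that mat.subspace_diff[OF Ssub] by metis
    then have "mat_scale (1 / (c' - c)) (mat_scale (c' - c) t) \<in> S" using mat.subspace_scale[OF Ssub] by blast
    moreover have "mat_scale (1 / (c' - c)) (mat_scale (c' - c) t) = t"
      using ne by (simp add: vec_eq_iff mat_scale_def)
    ultimately show False using tS by simp
  qed
  define lam where "lam u = (THE c. u - mat_scale c t \<in> S)" for u
  have lam_eq: "lam u = c" if "u - mat_scale c t \<in> S" for u c
    unfolding lam_def
    by (rule the_equality[where P="\<lambda>c. u - mat_scale c t \<in> S", OF that]) (rule uniq[OF _ that])
  have lamI: "u - mat_scale (lam u) t \<in> S" if uSt: "u \<in> St" for u
  proof -
    obtain c where c: "u - mat_scale c t \<in> S" using ex1[OF uSt] by blast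
    then show ?thesis using lam_eq[OF c] by simp
  qed
  define H where "H u = (u - mat_scale (lam u) t) *v x0 + lam u *s F t" for u
  have H_add: "\<forall>u\<in>St. \<forall>v\<in>St. H (u + v) = H u + H v"
  proof (intro ballI)
    fix u v assume u: "u \<in> St" and v: "v \<in> St"
    have e1: "u + v - mat_scale (lam u + lam v) t = (u - mat_scale (lam u) t) + (v - mat_scale (lam v) t)"
      by (simp add: vec_eq_iff mat_scale_def algebra_simps)
    have "u + v - mat_scale (lam u + lam v) t \<in> S"
      unfolding e1 using lamI[OF u] lamI[OF v] mat.subspace_add[OF Ssub] by blast
    then have luv: "lam (u + v) = lam u + lam v" by (rule lam_eq)
    show "H (u + v) = H u + H v"
      unfolding H_def luv e1 mv_add by (simp add: vec_eq_iff algebra_simps)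
  qed
  have rcH: "\<forall>u\<in>St. \<exists>w. H u - u *v w \<in> {0}"
  proof
    fix u assume u: "u \<in> St"
    define c where "c = lam u"
    define s where "s = u - mat_scale c t"
    have sS: "s \<in> S" unfolding s_def c_def using lamI[OF u] .
    show "\<exists>w. H u - u *v w \<in> {0}"
    proof (cases "c = 0")
      case True
      then have "H u = u *v x0" by (simp add: H_def c_def[symmetric])
      then have "H u - u *v x0 \<in> {0}" by simp
      then show ?thesis by blast
    next
      case False
      define s' where "s' = mat_scale (1 / c) s"
      have s'S: "s' \<in> S" unfolding s'_def using sS mat.subspace_scale[OF Ssub] by blast
      have tsT: "t + s' \<in> T" using T_grp tT s'S S_T unfolding additive_subgroup_def by blast
      have Fts: "F (t + s') = F t + s' *v x0" using F_hom tT s'S S_T x0 by auto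
      have "F (t + s') \<in> range (\<lambda>x. (t + s') *v x)" using F_rc tsT unfolding range_compatible_def by blast
      then obtain w where w: "F (t + s') = (t + s') *v w" by blast
      have us: "u = mat_scale c (t + s')"
        using False by (simp add: s'_def s_def vec_eq_iff mat_scale_def field_simps)
      have ss: "s = mat_scale c s'"
        using False by (simp add: s'_def vec_eq_iff mat_scale_def)
      have "H u = s *v x0 + c *s F t" by (simp add: H_def s_def c_def)
      also have "\<dots> = c *s (F t + s' *v x0)" unfolding ss mv_scale by (simp add: vec_eq_iff algebra_simps)
      also have "\<dots> = c *s ((t + s') *v w)" using Fts w by simp
      also have "\<dots> = u *v w" unfolding us mv_scale ..
      finally show ?thesis by auto
    qed
  qed
  have cdt: "mat.dim (UNIV :: ('a^'n^'m) set) + 2 \<le> mat.dim (TY St {0}) + vec.dim (UNIV :: ('a^'m) set)"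
    using cd mat.dim_subset[OF SSt] TY0[OF Stsub] by simp
  obtain x' where x': "\<forall>u\<in>St. H u - u *v x' \<in> {0}"
    using main[OF Stsub H_add, of "{0}" "vec.dim (UNIV :: ('a^'m) set)"] cdt rcH by auto
  have Ss: "s *v (x0 - x') = 0" if sS: "s \<in> S" for s
  proof -
    have "lam s = 0" using sS by (intro lam_eq) simp
    then have "H s = s *v x0" by (simp add: H_def)
    moreover have "H s = s *v x'" using x' sS SSt by auto
    ultimately show ?thesis by (simp add: mv_rdiff)
  qed
  have "lam t = 1" by (rule lam_eq) (simp add: mat.subspace_0[OF Ssub])
  then have Ht: "H t = F t" by (simp add: H_def mv_zero)
  have Ft: "F t = t *v x'" using x' tSt Ht by auto
  have "x0 = x'"
  proof (rule ccontr)
    assume "x0 \<noteq> x'"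
    then have z: "x0 - x' \<noteq> 0" by simp
    have "mat.dim (BW (x0 - x') {0} :: ('a^'n^'m) set) + vec.dim (UNIV :: ('a^'m) set) = mat.dim (UNIV :: ('a^'n^'m) set)"
      by (rule dim_BW[OF z vec.subspace_single_0]) simp
    moreover have "S \<subseteq> BW (x0 - x') {0}" using Ss by (auto simp: BW_def)
    then have "mat.dim S \<le> mat.dim (BW (x0 - x') {0} :: ('a^'n^'m) set)" by (rule mat.dim_subset)
    ultimately show False using cd by simp
  qed
  then show ?thesis using Ft by simp
qed

theorem theorem2p8:
  fixes T S :: "('a::field ^ 'n ^ 'm) set"
    and F :: "'a ^ 'n ^ 'm \<Rightarrow> 'a ^ 'm"
  assumes T_grp: "additive_subgroup T"
    and S_sub: "module.subspace mat_scale S"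
    and S_T: "S \<subseteq> T"
    and codim: "int (vector_space.dim mat_scale (UNIV :: ('a ^ 'n ^ 'm) set))
                  - int (vector_space.dim mat_scale S)
                \<le> int (vector_space.dim (\<lambda>(c::'a) (v::'a^'m). c *s v) UNIV) - 2"
    and F_hom: "\<forall>s\<in>T. \<forall>t\<in>T. F (s + t) = F s + F t"
    and F_rc: "range_compatible T F"
  shows "\<exists>x :: 'a ^ 'n. \<forall>t\<in>T. F t = t *v x"
proof -
  have Ssub: "mat.subspace S" using S_sub .
  have F_add: "\<forall>u\<in>S. \<forall>v\<in>S. F (u + v) = F u + F v" using F_hom S_T by (meson subsetD)
  have cd: "mat.dim (UNIV :: ('a^'n^'m) set) + 2 \<le> mat.dim S + vec.dim (UNIV :: ('a^'m) set)"
    using codim by simp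
  have rc0: "\<forall>s\<in>S. \<exists>w. F s - s *v w \<in> {0}"
  proof
    fix s assume "s \<in> S"
    then have "F s \<in> range (\<lambda>x. s *v x)" using F_rc S_T unfolding range_compatible_def by blast
    then show "\<exists>w. F s - s *v w \<in> {0}" by auto
  qed
  have "\<exists>x. \<forall>s\<in>S. F s - s *v x \<in> {0}"
    by (rule main[OF Ssub F_add vec.subspace_single_0 _ _ rc0]) (use cd TY0[OF Ssub] in simp_all)
  then obtain x0 where "\<forall>s\<in>S. F s - s *v x0 \<in> {0}" by blast
  then have x0: "\<forall>s\<in>S. F s = s *v x0" by simp
  have "F t = t *v x0" if tT: "t \<in> T" for t
  proof (cases "t \<in> S")
    case True then show ?thesis using x0 by blast
  next
    case False
    show ?thesis by (rule extend_t[OF T_grp Ssub S_T F_hom F_rc x0 cd tT False])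
  qed
  then show ?thesis by blast
qed

end
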